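(* Let $f,g:\mathbb{R}^n\to[0,+\infty)$ and $h_1,h_2:\mathbb{R}^n\to\mathbb{R}$, let $C\subseteq\mathbb{R}^n$ be closed and convex, $\Omega:=\{x:g(x)\neq0\}$, $C\cap\Omega\neq\emptyset$, and assume: $f$ is convex; $g$ is differentiable with locally Lipschitz gradient; $h_1$ is differentiable with locally Lipschitz gradient; $h_2$ is convex. Let $F$, $H$ and Algorithm 1 be as in the context, run with parameters $x^0\in\mathrm{dom}F$, $0<\underline{\alpha}<\overline{\alpha}$, $\sigma>0$, $0<r<1$, and assume the level set $\mathcal{X}_0:=\{x\in\mathrm{dom}F:F(x)\le F(x^0)\}$ is compact. Then Algorithm 1 is well defined: there exists $\underline{\alpha}_\sigma>0$ such that for every $k\in\mathbb{N}$ the inner loop (Step 2) terminates after finitely many reductions, at some $\alpha_k\ge\min\{\underline{\alpha},\underline{\alpha}_\sigma\}\,r$. Moreover, the generated sequence $\{x^k:k\in\mathbb{N}\}$ lies in $\mathcal{X}_0\subseteq\Omega\cap C$ and satisfies $$F(x^{k+1})+\frac{\sigma}{2}\|x^{k+1}-x^k\|_2^2\le F(x^k)\quad\text{for all }k\in\mathbb{N}.$$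
   Context: $F(x)=f^2(x)/g(x)+h_1(x)-h_2(x)$ if $x\in\Omega\cap C$, $F(x)=+\infty$ otherwise. $\iota_C$ is the indicator of $C$, $h_2^\star(z)=\sup_x\{\langle x,z\rangle-h_2(x)\}$ is the convex conjugate, $\partial h_2$ is the convex subdifferential, and $\mathrm{prox}_\varphi(y)=\arg\min_x\{\varphi(x)+\frac12\|x-y\|_2^2\}$. Define $H:\mathbb{R}^n\times\mathbb{R}^n\times\mathbb{R}\to(-\infty,+\infty]$ by $H(x,z,c)=2cf(x)+\iota_C(x)-c^2g(x)+h_1(x)+h_2^\star(z)-\langle x,z\rangle$. Algorithm 1: given $x^0\in\mathrm{dom}F$, $0<\underline{\alpha}<\overline{\alpha}$, $\sigma>0$, $0<r<1$, for $k=0,1,2,\dots$: (Step 1) compute $c_k=f(x^k)/g(x^k)$, choose $z^k\in\partial h_2(x^k)$, set $\alpha:=\widetilde{\alpha}_k$ for some $\widetilde{\alpha}_k\in[\underline{\alpha},\overline{\alpha}]$; (Step 2) compute $\widehat{x}^k\in\mathrm{prox}_{2\alpha c_kf+\iota_C}\big(x^k-\alpha(\nabla h_1(x^k)-c_k^2\nabla g(x^k)-z^k)\big)$; if $\widehat{x}^k\in\Omega$ and $H(\widehat{x}^k,z^k,f(\widehat{x}^k)/g(\widehat{x}^k))+\frac{\sigma}{2}\|\widehat{x}^k-x^k\|_2^2\le F(x^k)$, set $x^{k+1}=\widehat{x}^k$ and $\alpha_k:=\alpha$ and go to the next $k$; otherwise set $\alpha:=r\alpha$ and repeat Step 2. 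*)

theory Defs
  imports "HOL-Analysis.Analysis"
begin

definition conv_subdiff :: "('a::real_inner \<Rightarrow> real) \<Rightarrow> 'a \<Rightarrow> 'a set" where
  "conv_subdiff h x = {z. \<forall>y. h y \<ge> h x + inner z (y - x)}"

definition conv_conj :: "('a::real_inner \<Rightarrow> real) \<Rightarrow> 'a \<Rightarrow> ereal" where
  "conv_conj h z = (SUP x. ereal (inner x z - h x))"

definition indic :: "'a set \<Rightarrow> 'a \<Rightarrow> ereal" where
  "indic C x = (if x \<in> C then 0 else \<infinity>)"

definition prox_set :: "('a::real_normed_vector \<Rightarrow> ereal) \<Rightarrow> 'a \<Rightarrow> 'a set" where
  "prox_set \<phi> y = {x. \<forall>u. \<phi> x + ereal (norm (x - y)^2 / 2) \<le> \<phi> u + ereal (norm (u - y)^2 / 2)}"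

definition loc_lipschitz :: "('a::metric_space \<Rightarrow> 'b::metric_space) \<Rightarrow> bool" where
  "loc_lipschitz G \<longleftrightarrow> (\<forall>x. \<exists>e>0. \<exists>L. L-lipschitz_on (ball x e) G)"

definition objF :: "('a \<Rightarrow> real) \<Rightarrow> ('a \<Rightarrow> real) \<Rightarrow> ('a \<Rightarrow> real) \<Rightarrow> ('a \<Rightarrow> real)
    \<Rightarrow> 'a set \<Rightarrow> 'a \<Rightarrow> ereal" where
  "objF f g h1 h2 C x =
     (if g x \<noteq> 0 \<and> x \<in> C then ereal ((f x)^2 / g x + h1 x - h2 x) else \<infinity>)"

definition funH :: "('a::real_inner \<Rightarrow> real) \<Rightarrow> ('a \<Rightarrow> real) \<Rightarrow> ('a \<Rightarrow> real) \<Rightarrow> ('a \<Rightarrow> real)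
    \<Rightarrow> 'a set \<Rightarrow> 'a \<Rightarrow> 'a \<Rightarrow> real \<Rightarrow> ereal" where
  "funH f g h1 h2 C x z c =
     ereal (2 * c * f x) + indic C x - ereal (c^2 * g x) + ereal (h1 x)
       + conv_conj h2 z - ereal (inner x z)"

end

theory Submission
  imports Defs
begin


lemma loclip_isCont:
  assumes "loc_lipschitz G" shows "isCont G x"
proof -
  obtain e L where e: "e > 0" "L-lipschitz_on (ball x e) G"
    using assms unfolding loc_lipschitz_def by blast
  have "continuous_on (ball x e) G" using lipschitz_on_continuous_on[OF e(2)] .
  then show ?thesis using e(1) by (simp add: continuous_on_eq_continuous_at)
qed

lemma loclip_compact:
  fixes G :: "'a::euclidean_space \<Rightarrow> 'b::euclidean_space"
  assumes "loc_lipschitz G" "compact K"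
  shows "\<exists>L. L-lipschitz_on K G"
proof -
  have ll: "local_lipschitz {0::real} K (\<lambda>t. G)"
  proof (rule local_lipschitzI)
    fix t :: real and x assume "t \<in> {0}" "x \<in> K"
    obtain e L where e: "e > 0" "L-lipschitz_on (ball x e) G"
      using assms(1) unfolding loc_lipschitz_def by blast
    have "L-lipschitz_on (cball x (e/2) \<inter> K) G"
      by (rule lipschitz_on_subset[OF e(2)]) (use e(1) in auto)
    then show "\<exists>u>0. \<exists>L. \<forall>t\<in>cball t u \<inter> {0}. L-lipschitz_on (cball x u \<inter> K) G"
      using e(1) by (intro exI[of _ "e/2"]) auto
  qed
  obtain L where "\<And>t. t \<in> {0::real} \<Longrightarrow> L-lipschitz_on K G"
    by (rule local_lipschitz_compact_implies_lipschitz[OF ll assms(2)]) auto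
  then show ?thesis by blast
qed

lemma convex_lip_step:
  fixes f :: "'a::real_normed_vector \<Rightarrow> real"
  assumes f: "convex_on UNIV f" and rho: "\<rho> > 0"
    and bx: "\<bar>f x\<bar> \<le> B" and bw: "\<And>w. norm (w - y) \<le> \<rho> \<Longrightarrow> \<bar>f w\<bar> \<le> B"
  shows "f y - f x \<le> 2 * B / \<rho> * norm (y - x)"
proof (cases "y = x")
  case True then show ?thesis by simp
next
  case False
  define t where "t = norm (y - x)"
  have t: "t > 0" using False by (simp add: t_def)
  define w where "w = y + (\<rho> / t) *\<^sub>R (y - x)"
  define l where "l = t / (t + \<rho>)"
  have l: "0 \<le> l" "l \<le> 1" using t rho by (auto simp: l_def)
  have "norm (w - y) = \<bar>\<rho> / t\<bar> * t" by (simp add: w_def t_def)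
  then have nw: "norm (w - y) = \<rho>" using t rho by simp
  have tr: "t + \<rho> > 0" using t rho by simp
  have lr: "l * \<rho> / t = \<rho> / (t + \<rho>)" using t tr by (simp add: l_def)
  have "(1 - l) *\<^sub>R x + l *\<^sub>R w = y"
  proof -
    have eq: "(1 - l) *\<^sub>R x + l *\<^sub>R w = (1 - l - l * \<rho> / t) *\<^sub>R x + (l + l * \<rho> / t) *\<^sub>R y"
      by (simp add: w_def algebra_simps)
    have s1: "t/(t+\<rho>) + \<rho>/(t+\<rho>) = 1" using tr by (simp flip: add_divide_distrib)
    have "1 - l - l * \<rho> / t = 0" unfolding lr using s1 by (simp add: l_def)
    moreover have "l + l * \<rho> / t = 1" unfolding lr using s1 by (simp add: l_def)
    ultimately show ?thesis using eq by simp
  qed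
  then have "f y \<le> (1 - l) * f x + l * f w"
    using convex_onD[OF f, of l x w] l by (simp add: add.commute)
  then have "f y - f x \<le> l * (f w - f x)" by (simp add: algebra_simps)
  also have "\<dots> \<le> l * (2 * B)"
    using bw[of w] nw bx l by (intro mult_left_mono) auto
  also have "l \<le> t / \<rho>" using t rho by (simp add: l_def field_simps)
  then have "l * (2 * B) \<le> t / \<rho> * (2 * B)"
    using bx by (intro mult_right_mono) auto
  finally show ?thesis by (simp add: t_def mult.commute)
qed

lemma subgrad_bound:
  fixes h :: "'a::real_inner \<Rightarrow> real"
  assumes z: "z \<in> conv_subdiff h x" and rho: "\<rho> > 0"
    and bw: "\<And>w. norm (w - x) \<le> \<rho> \<Longrightarrow> \<bar>h w\<bar> \<le> B"
  shows "norm z \<le> 2 * B / \<rho>"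
proof (cases "z = 0")
  case True then show ?thesis using bw[of x] rho by auto
next
  case False
  define y where "y = x + (\<rho> / norm z) *\<^sub>R z"
  have "h y \<ge> h x + inner z (y - x)" using z by (auto simp: conv_subdiff_def)
  moreover have "inner z (y - x) = \<rho> * norm z"
    using False by (simp add: y_def inner_commute power2_norm_eq_inner[symmetric] power2_eq_square)
  moreover have "norm (y - x) = \<rho>" using False rho by (simp add: y_def)
  ultimately have "\<rho> * norm z \<le> 2 * B" using bw[of y] bw[of x] rho by force
  then show ?thesis using rho by (simp add: field_simps mult.commute)
qed

lemma conj_subgrad:
  fixes h :: "'a::real_inner \<Rightarrow> real"
  assumes z: "z \<in> conv_subdiff h x"
  shows "conv_conj h z = ereal (inner x z - h x)"
  unfolding conv_conj_def
proof (rule antisym)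
  show "(SUP y. ereal (inner y z - h y)) \<le> ereal (inner x z - h x)"
  proof (rule SUP_least)
    fix y
    have "h y \<ge> h x + inner z (y - x)" using z by (auto simp: conv_subdiff_def)
    then show "ereal (inner y z - h y) \<le> ereal (inner x z - h x)"
      by (simp add: inner_diff_right inner_commute)
  qed
  show "ereal (inner x z - h x) \<le> (SUP y. ereal (inner y z - h y))"
    by (rule SUP_upper) auto
qed

lemma descent:
  fixes h :: "'a::real_inner \<Rightarrow> real"
  assumes der: "\<And>u. (h has_derivative (\<lambda>v. inner (Dh u) v)) (at u)"
    and lip: "L-lipschitz_on (cball x (norm (y - x))) Dh"
  shows "\<bar>h y - h x - inner (Dh x) (y - x)\<bar> \<le> L * (norm (y - x))^2"
proof -
  define S where "S = cball x (norm (y - x))"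
  have L0: "L \<ge> 0" using lip lipschitz_on_nonneg by blast
  have "norm ((h y - inner (Dh x) y) - (h x - inner (Dh x) x)) \<le> (L * norm (y - x)) * norm (y - x)"
  proof (rule differentiable_bound[where f'="\<lambda>u v. inner (Dh u - Dh x) v"])
    show "convex S" by (simp add: S_def)
    fix u assume u: "u \<in> S"
    have "((\<lambda>u. h u - inner (Dh x) u) has_derivative (\<lambda>v. inner (Dh u) v - inner (Dh x) v)) (at u)"
      by (intro derivative_intros der)
    then show "((\<lambda>u. h u - inner (Dh x) u) has_derivative (\<lambda>v. inner (Dh u - Dh x) v)) (at u within S)"
      by (auto simp: inner_diff_left intro: has_derivative_at_withinI)
    have "onorm (\<lambda>v. inner (Dh u - Dh x) v) \<le> norm (Dh u - Dh x)"
      by (rule onorm_bound) (auto simp: Cauchy_Schwarz_ineq2)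
    also have "norm (Dh u - Dh x) \<le> L * dist u x"
      using lipschitz_onD[OF lip, of u x] u by (auto simp: S_def dist_norm)
    also have "\<dots> \<le> L * norm (y - x)"
      using u L0 by (intro mult_left_mono) (auto simp: S_def dist_norm norm_minus_commute)
    finally show "onorm (\<lambda>v. inner (Dh u - Dh x) v) \<le> L * norm (y - x)" .
  qed (auto simp: S_def dist_norm norm_minus_commute)
  then show ?thesis by (simp add: inner_diff_right power2_eq_square algebra_simps)
qed

lemma small_root:
  fixes t a b \<rho> :: real
  assumes "t \<ge> 0" "t^2 \<le> a + b * t" "2 * b \<le> \<rho>" "2 * a \<le> \<rho>^2" "\<rho> \<ge> 0"
  shows "t \<le> \<rho>"
proof (rule ccontr)
  assume "\<not> t \<le> \<rho>"
  then have tr: "t > \<rho>" by simp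
  have "b * t \<le> t / 2 * t" using assms tr by (intro mult_right_mono) auto
  then have "t^2 \<le> 2 * a" using assms(2) by (simp add: power2_eq_square)
  also have "\<dots> \<le> \<rho>^2" by fact
  finally have "t \<le> \<rho>" using assms by (simp add: power_mono_iff abs_le_square_iff)
  then show False using tr by simp
qed

lemma step_core:
  fixes x xh z Dq Dg v d :: "'a::real_inner"
    and fx fxh gx gxh h1x h1xh c \<alpha> \<gamma> Cb La Lg Lf Lgg \<sigma> :: real
  assumes gx: "gx > 0" and gxh: "gxh \<ge> \<gamma>" and gam: "\<gamma> > 0"
    and c: "c = fx / gx" "0 \<le> c" "c \<le> Cb"
    and d: "d = xh - x"
    and prox: "2*\<alpha>*c*fxh + (norm d)^2/2 + \<alpha> * inner d v \<le> 2*\<alpha>*c*fx"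
    and v: "v = Dq - c^2 *\<^sub>R Dg - z"
    and h1b: "h1xh \<le> h1x + inner Dq d + La*(norm d)^2"
    and gb: "gxh \<ge> gx + inner Dg d - Lg*(norm d)^2"
    and fL: "\<bar>fxh - fx\<bar> \<le> Lf * norm d" and gL: "\<bar>gxh - gx\<bar> \<le> Lgg * norm d"
    and al: "\<alpha> > 0" and thr: "La + Cb^2*Lg + (Lf + Cb*Lgg)^2/\<gamma> + \<sigma>/2 \<le> 1/(2*\<alpha>)"
    and nn: "Lg \<ge> 0" "Lf \<ge> 0" "Lgg \<ge> 0"
  shows "fxh^2/gxh + h1xh - inner xh z + \<sigma>/2 * (norm d)^2 \<le> fx^2/gx + h1x - inner x z"
proof -
  define n where "n = (norm d)^2"
  have n0: "n \<ge> 0" by (simp add: n_def)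
  have s1: "2*c*fxh + n/(2*\<alpha>) + inner d v \<le> 2*c*fx"
  proof -
    have "\<alpha> * (2*c*fxh + n/(2*\<alpha>) + inner d v) \<le> \<alpha> * (2*c*fx)"
      using prox al by (simp add: n_def algebra_simps)
    then show ?thesis using al by simp
  qed
  have s2: "inner d v = inner Dq d - c^2 * inner Dg d - (inner xh z - inner x z)"
    by (simp add: v d inner_diff_left inner_diff_right inner_commute)
  have s3: "- (c^2 * gxh) \<le> - (c^2 * gx) - c^2 * inner Dg d + Cb^2 * Lg * n"
  proof -
    have "c^2 * gxh \<ge> c^2 * (gx + inner Dg d - Lg*n)"
      using gb by (intro mult_left_mono) (auto simp: n_def)
    moreover have "c^2 * Lg * n \<le> Cb^2 * Lg * n"
      using c nn n0 by (intro mult_right_mono power_mono) auto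
    ultimately show ?thesis by (simp add: algebra_simps)
  qed
  have fx: "fx = c * gx" using c gx by simp
  have s4: "2*c*fx - c^2*gx = fx^2/gx" using gx by (simp add: fx power2_eq_square)
  have A: "2*c*fxh - c^2*gxh + h1xh - inner xh z \<le> fx^2/gx + h1x - inner x z + (La + Cb^2*Lg - 1/(2*\<alpha>)) * n"
    using s1 s2 s3 s4 h1b by (simp add: n_def algebra_simps)
  have gxh0: "gxh > 0" using gxh gam by simp
  have s5: "fxh^2/gxh = 2*c*fxh - c^2*gxh + (fxh - c*gxh)^2/gxh"
    using gxh0 by (simp add: field_simps power2_eq_square)
  define E where "E = Lf + Cb*Lgg"
  have s6: "\<bar>fxh - c*gxh\<bar> \<le> E * norm d"
  proof -
    have "fxh - c*gxh = (fxh - fx) - c*(gxh - gx)" by (simp add: fx algebra_simps)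
    then have "\<bar>fxh - c*gxh\<bar> \<le> \<bar>fxh - fx\<bar> + \<bar>c*(gxh - gx)\<bar>"
      using abs_triangle_ineq4[of "fxh - fx" "c*(gxh-gx)"] by simp
    also have "\<bar>c*(gxh - gx)\<bar> = c * \<bar>gxh - gx\<bar>" using c(2) by (simp add: abs_mult)
    also have "\<bar>fxh - fx\<bar> + c * \<bar>gxh - gx\<bar> \<le> Lf * norm d + Cb * (Lgg * norm d)"
      using fL gL c(2,3) nn by (intro add_mono mult_mono) auto
    finally show ?thesis by (simp add: E_def algebra_simps)
  qed
  have s7: "(fxh - c*gxh)^2/gxh \<le> E^2/\<gamma> * n"
  proof -
    have "(fxh - c*gxh)^2 \<le> (E * norm d)^2"
      using s6 by (metis abs_le_square_iff abs_ge_zero order_trans power2_abs abs_of_nonneg)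
    then have "(fxh - c*gxh)^2/gxh \<le> (E * norm d)^2/gxh" using gxh0 by (simp add: divide_right_mono)
    also have "\<dots> \<le> (E * norm d)^2/\<gamma>" using gxh gam by (intro divide_left_mono) auto
    finally show ?thesis by (simp add: n_def power_mult_distrib)
  qed
  have s8: "(La + Cb^2*Lg - 1/(2*\<alpha>)) * n + E^2/\<gamma> * n \<le> - (\<sigma>/2) * n"
  proof -
    have "(La + Cb^2*Lg - 1/(2*\<alpha>) + E^2/\<gamma>) * n \<le> (- (\<sigma>/2)) * n"
      using thr n0 by (intro mult_right_mono) (auto simp: E_def)
    then show ?thesis by (simp add: algebra_simps)
  qed
  show ?thesis using A s5 s7 s8 by (simp add: n_def)
qed

lemma bnd_compact:
  fixes G :: "'a::metric_space \<Rightarrow> 'b::real_normed_vector"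
  assumes "continuous_on UNIV G" "compact S"
  shows "\<exists>B>0. \<forall>x\<in>S. norm (G x) \<le> B"
proof -
  have "compact (G ` S)"
    by (rule compact_continuous_image[OF continuous_on_subset[OF assms(1)] assms(2)]) auto
  then have "bounded (G ` S)" by (rule compact_imp_bounded)
  then show ?thesis unfolding bounded_pos by auto
qed

lemma prox_real:
  assumes "xh \<in> prox_set (\<lambda>u. ereal (a * f u) + indic C u) y" "x \<in> C"
  shows "xh \<in> C \<and> a * f xh + norm (xh - y)^2/2 \<le> a * f x + norm (x - y)^2/2"
proof -
  have *: "ereal (a * f xh) + indic C xh + ereal (norm (xh - y)^2/2)
      \<le> ereal (a * f x) + indic C x + ereal (norm (x - y)^2/2)"
    using assms(1) unfolding prox_set_def by blast
  have "xh \<in> C"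
  proof (rule ccontr)
    assume "xh \<notin> C"
    then show False using * assms(2) by (simp add: indic_def)
  qed
  then show ?thesis using * assms(2) by (simp add: indic_def)
qed

lemma norm_expand:
  fixes d v :: "'a::real_inner"
  shows "norm (d + a *\<^sub>R v)^2 = norm d ^2 + 2 * a * inner d v + a^2 * norm v ^2"
  unfolding power2_norm_eq_inner
  by (simp add: inner_add_left inner_add_right inner_commute power2_eq_square algebra_simps)

lemma F_le_funH:
  fixes x xh z :: "'a::real_inner"
  assumes z: "z \<in> conv_subdiff h2 x" and xhC: "xh \<in> C" and gxh: "g xh \<noteq> 0"
  shows "objF f g h1 h2 C xh \<le> funH f g h1 h2 C xh z (f xh / g xh)"
proof -
  have "h2 xh \<ge> h2 x + inner z (xh - x)" using z by (auto simp: conv_subdiff_def)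
  moreover have "2 * (f xh / g xh) * f xh - (f xh / g xh)^2 * g xh = (f xh)^2 / g xh"
    using gxh by (simp add: field_simps power2_eq_square)
  ultimately show ?thesis
    unfolding funH_def objF_def conj_subgrad[OF z] using xhC gxh
    by (simp add: indic_def inner_diff_right inner_commute)
qed

lemma accept_of_real:
  fixes x xh z :: "'a::real_inner"
  assumes z: "z \<in> conv_subdiff h2 x" and xhC: "xh \<in> C" and gxh: "g xh \<noteq> 0"
    and xC: "x \<in> C" and gx: "g x \<noteq> 0"
    and ineq: "(f xh)^2/g xh + h1 xh - inner xh z + s \<le> (f x)^2/g x + h1 x - inner x z"
  shows "funH f g h1 h2 C xh z (f xh / g xh) + ereal s \<le> objF f g h1 h2 C x"
proof -
  have "2 * (f xh / g xh) * f xh - (f xh / g xh)^2 * g xh = (f xh)^2 / g xh"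
    using gxh by (simp add: field_simps power2_eq_square)
  then show ?thesis
    unfolding funH_def objF_def conj_subgrad[OF z] using xhC gxh xC gx ineq
    by (simp add: indic_def inner_commute)
qed

theorem proposition4p2:
  fixes f g h1 h2 :: "real^'n \<Rightarrow> real"
    and Dg Dh1 :: "real^'n \<Rightarrow> real^'n"
    and C :: "(real^'n) set"
    and x0 :: "real^'n"
    and alo ahi \<sigma> r :: real
  assumes f_nonneg: "\<forall>x. f x \<ge> 0"
    and g_nonneg: "\<forall>x. g x \<ge> 0"
    and C_closed: "closed C" and C_convex: "convex C"
    and C_Omega: "C \<inter> {x. g x \<noteq> 0} \<noteq> {}"
    and f_convex: "convex_on UNIV f"
    and g_grad: "\<forall>x. (g has_derivative (\<lambda>v. inner (Dg x) v)) (at x)"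
    and Dg_lip: "loc_lipschitz Dg"
    and h1_grad: "\<forall>x. (h1 has_derivative (\<lambda>v. inner (Dh1 x) v)) (at x)"
    and Dh1_lip: "loc_lipschitz Dh1"
    and h2_convex: "convex_on UNIV h2"
    and x0_dom: "objF f g h1 h2 C x0 < \<infinity>"
    and params: "0 < alo" "alo < ahi" "\<sigma> > 0" "0 < r" "r < 1"
    and X0_compact: "compact {x. objF f g h1 h2 C x < \<infinity> \<and> objF f g h1 h2 C x \<le> objF f g h1 h2 C x0}"
  shows "\<exists>a\<sigma>>0. \<forall>(x :: nat \<Rightarrow> real^'n) (z :: nat \<Rightarrow> real^'n) (alt :: nat \<Rightarrow> real)
            (xh :: nat \<Rightarrow> nat \<Rightarrow> real^'n).
     (let c = (\<lambda>k. f (x k) / g (x k));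
          accept = (\<lambda>k m. g (xh k m) \<noteq> 0 \<and>
             funH f g h1 h2 C (xh k m) (z k) (f (xh k m) / g (xh k m))
               + ereal (\<sigma> / 2 * (norm (xh k m - x k))^2) \<le> objF f g h1 h2 C (x k))
      in
      (x 0 = x0 \<and>
       (\<forall>k. z k \<in> conv_subdiff h2 (x k) \<and> alt k \<in> {alo..ahi}
          \<and> (\<forall>m. xh k m \<in> prox_set
                 (\<lambda>u. ereal (2 * (alt k * r ^ m) * c k * f u) + indic C u)
                 (x k - (alt k * r ^ m) *\<^sub>R (Dh1 (x k) - (c k)^2 *\<^sub>R Dg (x k) - z k)))
          \<and> x (Suc k) = xh k (LEAST m. accept k m)))
      \<longrightarrow>
      (\<forall>k. (\<exists>m. accept k m)
          \<and> alt k * r ^ (LEAST m. accept k m) \<ge> min alo a\<sigma> * r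
          \<and> x k \<in> {x. objF f g h1 h2 C x < \<infinity> \<and> objF f g h1 h2 C x \<le> objF f g h1 h2 C x0}
          \<and> objF f g h1 h2 C (x (Suc k)) + ereal (\<sigma> / 2 * (norm (x (Suc k) - x k))^2)
              \<le> objF f g h1 h2 C (x k))
      \<and> {x. objF f g h1 h2 C x < \<infinity> \<and> objF f g h1 h2 C x \<le> objF f g h1 h2 C x0}
          \<subseteq> {x. g x \<noteq> 0} \<inter> C)"
proof -
  define F where "F = objF f g h1 h2 C"
  define K where "K = {x. F x < \<infinity> \<and> F x \<le> F x0}"
  have Kc: "compact K" using X0_compact by (simp add: K_def F_def)
  have Kprop: "g x > 0 \<and> x \<in> C \<and> F x = ereal ((f x)^2 / g x + h1 x - h2 x)" if "x \<in> K" for x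
  proof -
    have "g x \<noteq> 0 \<and> x \<in> C" using that by (auto simp: K_def F_def objF_def split: if_splits)
    then show ?thesis using g_nonneg by (auto simp: F_def objF_def order_less_le)
  qed
  have KOmega: "K \<subseteq> {x. g x \<noteq> 0} \<inter> C" using Kprop by fastforce
  have contf: "continuous_on UNIV f" by (rule convex_on_continuous[OF open_UNIV f_convex])
  have conth2: "continuous_on UNIV h2" by (rule convex_on_continuous[OF open_UNIV h2_convex])
  have contg: "continuous_on UNIV g"
    using g_grad by (meson continuous_at_imp_continuous_on has_derivative_continuous)
  have contDg: "continuous_on UNIV Dg"
    using Dg_lip by (simp add: continuous_at_imp_continuous_on loclip_isCont)
  have contDh1: "continuous_on UNIV Dh1"
    using Dh1_lip by (simp add: continuous_at_imp_continuous_on loclip_isCont)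
  obtain \<gamma> where gam: "\<gamma> > 0" "\<And>x. x \<in> K \<Longrightarrow> g x \<ge> 2 * \<gamma>"
  proof (cases "K = {}")
    case True then show ?thesis using that[of 1] by auto
  next
    case False
    have "compact (g ` K)"
      by (rule compact_continuous_image[OF continuous_on_subset[OF contg] Kc]) auto
    then obtain m where m: "m \<in> g ` K" "\<forall>y\<in>g ` K. m \<le> y"
      using compact_attains_inf[of "g ` K"] False by auto
    have "m > 0" using m(1) Kprop by auto
    then show ?thesis using that[of "m/2"] m(2) by auto
  qed
  obtain \<delta>0 where d0: "\<delta>0 > 0" "\<forall>x\<in>K. \<forall>y\<in>{y. g y \<le> \<gamma>}. \<delta>0 \<le> dist x y"
  proof -
    have "closed {y. g y \<le> \<gamma>}"
      by (rule closed_Collect_le[OF contg continuous_on_const])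
    moreover have "K \<inter> {y. g y \<le> \<gamma>} = {}" using gam by force
    ultimately show ?thesis using separate_compact_closed[OF Kc] that by blast
  qed
  define \<delta> where "\<delta> = \<delta>0 / 2"
  have del: "\<delta> > 0" using d0 by (simp add: \<delta>_def)
  define K2 where "K2 = {a + b | a b. a \<in> K \<and> b \<in> cball 0 \<delta>}"
  have K2c: "compact K2" unfolding K2_def by (rule compact_sums[OF Kc compact_cball])
  have inK2: "u \<in> K2" if "x \<in> K" "norm (u - x) \<le> \<delta>" for x u
  proof -
    have "u = x + (u - x)" by simp
    moreover have "u - x \<in> cball 0 \<delta>" using that by (simp add: dist_norm norm_minus_commute)
    ultimately show ?thesis unfolding K2_def using that by blast
  qed
  have gK2: "g u > \<gamma>" if uK: "u \<in> K2" for u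
  proof -
    obtain a b where ab: "u = a + b" "a \<in> K" "norm b \<le> \<delta>" using uK by (auto simp: K2_def dist_norm)
    show ?thesis
    proof (rule ccontr)
      assume "\<not> g u > \<gamma>"
      then have "\<delta>0 \<le> dist a u" using d0 ab by auto
      moreover have "dist a u = norm b" using ab by (simp add: dist_norm)
      ultimately show False using ab del by (simp add: \<delta>_def)
    qed
  qed
  obtain Bf where Bf: "Bf > 0" "\<And>x. x \<in> K2 \<Longrightarrow> norm (f x) \<le> Bf"
    using bnd_compact[OF contf K2c] by blast
  obtain Bh where Bh: "Bh > 0" "\<And>x. x \<in> K2 \<Longrightarrow> norm (h2 x) \<le> Bh"
    using bnd_compact[OF conth2 K2c] by blast
  obtain M1 where M1: "M1 > 0" "\<And>x. x \<in> K2 \<Longrightarrow> norm (Dh1 x) \<le> M1"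
    using bnd_compact[OF contDh1 K2c] by blast
  obtain Mg where Mg: "Mg > 0" "\<And>x. x \<in> K2 \<Longrightarrow> norm (Dg x) \<le> Mg"
    using bnd_compact[OF contDg K2c] by blast
  obtain L1 where L1: "L1-lipschitz_on K2 Dh1" using loclip_compact[OF Dh1_lip K2c] by blast
  obtain Lg where Lg: "Lg-lipschitz_on K2 Dg" using loclip_compact[OF Dg_lip K2c] by blast
  have L10: "L1 \<ge> 0" using L1 lipschitz_on_nonneg by blast
  have Lg0: "Lg \<ge> 0" using Lg lipschitz_on_nonneg by blast
  define \<rho> where "\<rho> = \<delta> / 2"
  have rho: "\<rho> > 0" "\<rho> \<le> \<delta>" using del by (auto simp: \<rho>_def)
  define Cb where "Cb = Bf / \<gamma>"
  define Z where "Z = 2 * Bh / \<delta>"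
  define V where "V = M1 + Cb^2 * Mg + Z"
  define Lf where "Lf = 2 * Bf / \<rho>"
  define Lg1 where "Lg1 = Mg + Lg * \<rho>"
  define E where "E = Lf + Cb * Lg1"
  define Q where "Q = L1 + Cb^2*Lg + E^2/\<gamma> + \<sigma>/2"
  define a1 where "a1 = min (\<rho> / (4 * V + 1)) (\<rho>^2 / (8 * Cb * Bf + 1))"
  define as where "as = min a1 (1 / (2 * Q))"
  have Cb0: "Cb > 0" using Bf gam by (simp add: Cb_def)
  have Z0: "Z > 0" using Bh del by (simp add: Z_def)
  have V0: "V > 0" using M1 Mg Z0 Cb0 by (simp add: V_def add_pos_nonneg)
  have Lf0: "Lf > 0" using Bf rho by (simp add: Lf_def)
  have Lg10: "Lg1 > 0" using Mg Lg0 rho by (simp add: Lg1_def add_pos_nonneg)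
  have Q0: "Q > 0" using L10 Lg0 gam params(3) by (simp add: Q_def add_nonneg_pos)
  have a10: "a1 > 0" using rho V0 Cb0 Bf(1) by (simp add: a1_def add_pos_pos)
  have as0: "as > 0" using a10 Q0 by (simp add: as_def)

  have KEY: "g xh \<noteq> 0 \<and> funH f g h1 h2 C xh z (f xh / g xh) + ereal (\<sigma> / 2 * (norm (xh - x))^2) \<le> F x"
    if xK: "x \<in> K" and zs: "z \<in> conv_subdiff h2 x" and al: "0 < \<alpha>" "\<alpha> \<le> as"
      and px: "xh \<in> prox_set (\<lambda>u. ereal (2 * \<alpha> * (f x / g x) * f u) + indic C u)
                 (x - \<alpha> *\<^sub>R (Dh1 x - (f x / g x)^2 *\<^sub>R Dg x - z))" for x z \<alpha> xh
  proof -
    define c where "c = f x / g x"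
    define v where "v = Dh1 x - c^2 *\<^sub>R Dg x - z"
    define d where "d = xh - x"
    have gx: "g x > 0" and xC: "x \<in> C" using Kprop[OF xK] by auto
    have xK2: "x \<in> K2" using inK2[OF xK, of x] del by simp
    have fxB: "f x \<le> Bf" "\<bar>f x\<bar> \<le> Bf" using Bf(2)[OF xK2] by auto
    have gxg: "g x \<ge> \<gamma>" using gK2[OF xK2] by simp
    have c0: "c \<ge> 0" using f_nonneg gx by (simp add: c_def)
    have cB: "c \<le> Cb" unfolding c_def Cb_def
      by (rule frac_le) (use fxB gxg gam Bf in auto)
    have zB: "norm z \<le> Z" unfolding Z_def
      by (rule subgrad_bound[OF zs del]) (use Bf Bh(2) inK2[OF xK] in force)
    have vB: "norm v \<le> V"
    proof -
      have "norm v \<le> norm (Dh1 x - c^2 *\<^sub>R Dg x) + norm z"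
        unfolding v_def by (rule norm_triangle_ineq4)
      also have "\<dots> \<le> norm (Dh1 x) + norm (c^2 *\<^sub>R Dg x) + norm z"
        using norm_triangle_ineq4[of "Dh1 x" "c^2 *\<^sub>R Dg x"] by simp
      also have "norm (c^2 *\<^sub>R Dg x) \<le> Cb^2 * Mg"
        using Mg(2)[OF xK2] c0 cB by (simp add: mult_mono power_mono)
      finally show ?thesis using M1(2)[OF xK2] zB by (simp add: V_def)
    qed
    note pr0 = prox_real[OF px xC]
    have xhC: "xh \<in> C" using pr0 by blast
    have e1: "xh - (x - \<alpha> *\<^sub>R v) = d + \<alpha> *\<^sub>R v" by (simp add: d_def)
    have e2: "x - (x - \<alpha> *\<^sub>R v) = \<alpha> *\<^sub>R v" by simp
    have pr1: "2 * \<alpha> * c * f xh + norm (d + \<alpha> *\<^sub>R v)^2/2 \<le> 2 * \<alpha> * c * f x + norm (\<alpha> *\<^sub>R v)^2/2"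
      using pr0 unfolding c_def[symmetric] unfolding v_def[symmetric] unfolding e1 e2 by blast
    have pr: "2*\<alpha>*c*f xh + (norm d)^2/2 + \<alpha> * inner d v \<le> 2*\<alpha>*c*f x"
      using pr1 unfolding norm_expand by (simp add: power_mult_distrib add_divide_distrib)
    have dsmall: "norm d \<le> \<rho>"
    proof (rule small_root[where a="4*\<alpha>*Cb*Bf" and b="2*\<alpha>*V"])
      have "- inner d v \<le> norm d * V"
        using vB norm_cauchy_schwarz[of d v] Cauchy_Schwarz_ineq2[of d v]
        by (smt (verit) mult_left_mono norm_ge_zero abs_le_iff)
      moreover have "c * f x \<le> Cb * Bf" using c0 cB fxB f_nonneg by (intro mult_mono) auto
      moreover have "0 \<le> 2*\<alpha>*c*f xh" using al c0 f_nonneg by simp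
      ultimately have m1: "\<alpha> * (- inner d v) \<le> \<alpha> * (norm d * V)" and m2: "\<alpha> * (c * f x) \<le> \<alpha> * (Cb * Bf)"
        and m3: "0 \<le> 2*\<alpha>*c*f xh" using al by (metis less_eq_real_def mult_left_mono)+
      have "(norm d)^2/2 \<le> 2*\<alpha>*(Cb*Bf) + \<alpha> * (norm d * V)"
        using pr m1 m2 m3 by (simp add: algebra_simps)
      then show "(norm d)^2 \<le> 4*\<alpha>*Cb*Bf + 2*\<alpha>*V * norm d" by (simp add: algebra_simps)
      have "\<alpha> * (4 * V + 1) \<le> \<rho>" using al V0 unfolding as_def a1_def
        by (simp add: le_divide_eq)
      then show "2 * (2*\<alpha>*V) \<le> \<rho>" using al by (simp add: algebra_simps)
      have "0 < 8 * Cb * Bf + 1" using Cb0 Bf(1) by (simp add: add_pos_pos)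
      then have "\<alpha> * (8 * Cb * Bf + 1) \<le> \<rho>^2" using al unfolding as_def a1_def
        by (simp add: le_divide_eq)
      then show "2 * (4*\<alpha>*Cb*Bf) \<le> \<rho>^2" using al by (simp add: algebra_simps)
    qed (use rho in auto)
    have xhK2: "xh \<in> K2" using inK2[OF xK, of xh] dsmall rho by (simp add: d_def)
    have ballK2: "cball x (norm (xh - x)) \<subseteq> K2"
    proof
      fix w assume "w \<in> cball x (norm (xh - x))"
      then have "norm (w - x) \<le> \<delta>" using dsmall rho by (simp add: d_def dist_norm norm_minus_commute)
      then show "w \<in> K2" using inK2[OF xK] by blast
    qed
    have h1d: "\<bar>h1 xh - h1 x - inner (Dh1 x) d\<bar> \<le> L1 * (norm d)^2"
      unfolding d_def by (rule descent) (use h1_grad lipschitz_on_subset[OF L1 ballK2] in auto)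
    have gd: "\<bar>g xh - g x - inner (Dg x) d\<bar> \<le> Lg * (norm d)^2"
      unfolding d_def by (rule descent) (use g_grad lipschitz_on_subset[OF Lg ballK2] in auto)
    have gxh: "g xh \<ge> \<gamma>" using gK2[OF xhK2] by simp
    have gL: "\<bar>g xh - g x\<bar> \<le> Lg1 * norm d"
    proof -
      have "\<bar>inner (Dg x) d\<bar> \<le> Mg * norm d"
        using Cauchy_Schwarz_ineq2[of "Dg x" d] Mg(2)[OF xK2] by (meson mult_right_mono norm_ge_zero order_trans)
      moreover have "Lg * (norm d)^2 \<le> Lg * \<rho> * norm d"
        using dsmall Lg0 by (simp add: power2_eq_square mult_left_mono mult_right_mono mult.assoc)
      ultimately show ?thesis using gd by (simp add: Lg1_def algebra_simps)
    qed
    have fL: "\<bar>f xh - f x\<bar> \<le> Lf * norm d"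
    proof -
      have "f xh - f x \<le> 2 * Bf / \<rho> * norm (xh - x)"
      proof (rule convex_lip_step[OF f_convex rho(1) fxB(2)])
        fix w assume "norm (w - xh) \<le> \<rho>"
        then have "norm (w - x) \<le> \<delta>"
          using dsmall norm_triangle_ineq[of "w - xh" "xh - x"] by (simp add: d_def \<rho>_def)
        then show "\<bar>f w\<bar> \<le> Bf" using Bf(2) inK2[OF xK] by force
      qed
      moreover have "f x - f xh \<le> 2 * Bf / \<rho> * norm (x - xh)"
      proof (rule convex_lip_step[OF f_convex rho(1)])
        show "\<bar>f xh\<bar> \<le> Bf" using Bf(2)[OF xhK2] by simp
        fix w assume "norm (w - x) \<le> \<rho>"
        then show "\<bar>f w\<bar> \<le> Bf" using Bf(2) inK2[OF xK] rho by force
      qed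
      ultimately show ?thesis by (simp add: Lf_def d_def norm_minus_commute abs_le_iff)
    qed
    have thr: "L1 + Cb^2*Lg + (Lf + Cb*Lg1)^2/\<gamma> + \<sigma>/2 \<le> 1/(2*\<alpha>)"
    proof -
      have "\<alpha> \<le> 1 / (2 * Q)" using al by (simp add: as_def)
      then have "\<alpha> * (2 * Q) \<le> 1" using Q0 by (simp add: le_divide_eq)
      then have "Q \<le> 1/(2*\<alpha>)" using al by (simp add: le_divide_eq algebra_simps)
      then show ?thesis by (simp add: Q_def E_def)
    qed
    have core: "(f xh)^2/g xh + h1 xh - inner xh z + \<sigma>/2 * (norm d)^2 \<le> (f x)^2/g x + h1 x - inner x z"
    proof (rule step_core[where Dq="Dh1 x" and Dg="Dg x" and v=v and \<alpha>=\<alpha> and c=c and Cb=Cb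
          and La=L1 and Lg=Lg and Lf=Lf and Lgg=Lg1 and \<gamma>=\<gamma>])
      show "h1 xh \<le> h1 x + inner (Dh1 x) d + L1 * (norm d)^2" using h1d by (simp add: abs_le_iff)
      show "g xh \<ge> g x + inner (Dg x) d - Lg * (norm d)^2" using gd by (simp add: abs_le_iff)
    qed (use gx gxh gam c0 cB pr fL gL al thr Lg0 Lf0 Lg10 in \<open>auto simp: c_def v_def d_def\<close>)
    have gxh0: "g xh \<noteq> 0" using gxh gam by simp
    have gx0: "g x \<noteq> 0" using gx by simp
    have core': "(f xh)^2/g xh + h1 xh - inner xh z + \<sigma> / 2 * (norm (xh - x))^2 \<le> (f x)^2/g x + h1 x - inner x z"
      using core by (simp add: d_def)
    show ?thesis
      using accept_of_real[OF zs xhC gxh0 xC gx0 core'] gxh0 by (simp add: F_def)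
  qed
  have ACC: "F xh + ereal (\<sigma> / 2 * (norm (xh - x))^2) \<le> F x"
    if a1: "z \<in> conv_subdiff h2 x" and a2: "xh \<in> C" and a3: "g xh \<noteq> 0"
       and a4: "funH f g h1 h2 C xh z (f xh / g xh) + ereal (\<sigma> / 2 * (norm (xh - x))^2) \<le> F x" for x z xh
  proof -
    have "objF f g h1 h2 C xh \<le> funH f g h1 h2 C xh z (f xh / g xh)"
      by (rule F_le_funH) (rule a1, rule a2, rule a3)
    then have "F xh \<le> funH f g h1 h2 C xh z (f xh / g xh)" by (simp add: F_def)
    then show ?thesis using a4 by (meson add_right_mono order_trans)
  qed
  have EXM: "\<exists>m. a * r^m \<le> as" if "0 < a" "a \<le> ahi" for a
  proof -
    obtain m where "r^m < as / ahi" using real_arch_pow_inv[of "as / ahi" r] as0 params by auto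
    then have "ahi * r^m \<le> as" using params by (simp add: field_simps)
    moreover have "a * r^m \<le> ahi * r^m" using that params by (intro mult_right_mono) auto
    ultimately show ?thesis by (meson order_trans)
  qed
  show ?thesis
  proof (intro exI[of _ as] conjI as0 allI, unfold Let_def, intro impI)
    fix x z alt xh
    assume H: "x 0 = x0 \<and>
       (\<forall>k. z k \<in> conv_subdiff h2 (x k) \<and> alt k \<in> {alo..ahi}
          \<and> (\<forall>m. xh k m \<in> prox_set
                 (\<lambda>u. ereal (2 * (alt k * r ^ m) * (f (x k) / g (x k)) * f u) + indic C u)
                 (x k - (alt k * r ^ m) *\<^sub>R (Dh1 (x k) - (f (x k) / g (x k))^2 *\<^sub>R Dg (x k) - z k)))
          \<and> x (Suc k) = xh k (LEAST m. g (xh k m) \<noteq> 0 \<and>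
             funH f g h1 h2 C (xh k m) (z k) (f (xh k m) / g (xh k m))
               + ereal (\<sigma> / 2 * (norm (xh k m - x k))^2) \<le> objF f g h1 h2 C (x k)))"
    define A where "A = (\<lambda>k m. g (xh k m) \<noteq> 0 \<and>
             funH f g h1 h2 C (xh k m) (z k) (f (xh k m) / g (xh k m))
               + ereal (\<sigma> / 2 * (norm (xh k m - x k))^2) \<le> F (x k))"
    have x0e: "x 0 = x0" using H by blast
    have zk: "z k \<in> conv_subdiff h2 (x k)" for k using H by blast
    have altk: "alo \<le> alt k" "alt k \<le> ahi" for k using H by auto
    have pxk: "xh k m \<in> prox_set
                 (\<lambda>u. ereal (2 * (alt k * r ^ m) * (f (x k) / g (x k)) * f u) + indic C u)
                 (x k - (alt k * r ^ m) *\<^sub>R (Dh1 (x k) - (f (x k) / g (x k))^2 *\<^sub>R Dg (x k) - z k))"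
      for k m using H by blast
    have xs: "x (Suc k) = xh k (LEAST m. A k m)" for k using H by (simp add: A_def F_def)
    have altpos: "alt k * r^m > 0" for k m using altk(1)[of k] params by simp
    have goodA: "A k m" if "x k \<in> K" "alt k * r^m \<le> as" for k m
      unfolding A_def by (rule KEY[OF that(1) zk altpos that(2) pxk])
    have exA: "\<exists>m. A k m" if "x k \<in> K" for k
    proof -
      have "0 < alt k" "alt k \<le> ahi" using altk[of k] params by auto
      then obtain m where "alt k * r^m \<le> as" using EXM[of "alt k"] by blast
      then show ?thesis using goodA[OF that] by blast
    qed
    have step: "x (Suc k) \<in> K \<and> F (x (Suc k)) + ereal (\<sigma> / 2 * (norm (x (Suc k) - x k))^2) \<le> F (x k)"
      if xk: "x k \<in> K" for k
    proof -
      have AL: "A k (LEAST m. A k m)" using exA[OF xk] by (rule LeastI_ex)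
      have xhC: "xh k (LEAST m. A k m) \<in> C"
        using prox_real[OF pxk Kprop[OF xk, THEN conjunct2, THEN conjunct1]] by blast
      have D: "F (x (Suc k)) + ereal (\<sigma> / 2 * (norm (x (Suc k) - x k))^2) \<le> F (x k)"
        unfolding xs using ACC[OF zk xhC] AL by (simp add: A_def)
      have "F (x (Suc k)) \<le> F (x (Suc k)) + ereal (\<sigma> / 2 * (norm (x (Suc k) - x k))^2)"
        using params by (simp add: ereal_le_add_self)
      then have "F (x (Suc k)) \<le> F (x k)" using D by (rule order_trans)
      then show ?thesis using xk D by (auto simp: K_def)
    qed
    have inv: "x k \<in> K" for k
    proof (induction k)
      case 0 show ?case using x0_dom x0e by (simp add: K_def F_def)
    next
      case (Suc k) then show ?case using step by blast
    qed
    have low: "alt k * r ^ (LEAST m. A k m) \<ge> min alo as * r" for k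
    proof (cases "(LEAST m. A k m)")
      case 0
      have "min alo as * r \<le> alo * 1" using params by (intro mult_mono) auto
      then show ?thesis using 0 altk[of k] by simp
    next
      case (Suc j)
      have "\<not> A k j" using Suc by (metis lessI not_less_Least)
      then have "alt k * r^j > as" using goodA[OF inv] by force
      then have "r * as \<le> r * (alt k * r^j)" using params by simp
      moreover have "min alo as * r \<le> as * r" using params by simp
      ultimately show ?thesis using Suc by (simp add: algebra_simps)
    qed
    have R: "\<forall>k. (\<exists>m. A k m) \<and> alt k * r ^ (LEAST m. A k m) \<ge> min alo as * r \<and> x k \<in> K
        \<and> F (x (Suc k)) + ereal (\<sigma> / 2 * (norm (x (Suc k) - x k))^2) \<le> F (x k)"
      using exA inv low step by blast
    show "(\<forall>k. (\<exists>m. g (xh k m) \<noteq> 0 \<and>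
             funH f g h1 h2 C (xh k m) (z k) (f (xh k m) / g (xh k m))
               + ereal (\<sigma> / 2 * (norm (xh k m - x k))^2) \<le> objF f g h1 h2 C (x k))
          \<and> alt k * r ^ (LEAST m. g (xh k m) \<noteq> 0 \<and>
             funH f g h1 h2 C (xh k m) (z k) (f (xh k m) / g (xh k m))
               + ereal (\<sigma> / 2 * (norm (xh k m - x k))^2) \<le> objF f g h1 h2 C (x k)) \<ge> min alo as * r
          \<and> x k \<in> {x. objF f g h1 h2 C x < \<infinity> \<and> objF f g h1 h2 C x \<le> objF f g h1 h2 C x0}
          \<and> objF f g h1 h2 C (x (Suc k)) + ereal (\<sigma> / 2 * (norm (x (Suc k) - x k))^2)
              \<le> objF f g h1 h2 C (x k))
      \<and> {x. objF f g h1 h2 C x < \<infinity> \<and> objF f g h1 h2 C x \<le> objF f g h1 h2 C x0}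
          \<subseteq> {x. g x \<noteq> 0} \<inter> C"
      using R KOmega unfolding A_def K_def F_def by simp
  qed
qed

end
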